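(* Let $k\ge 2$ and $n\ge 2$, and run Protocol 2 on $n$ nodes with one node initially in state $L_0$ and all others in state $F$. Then Protocol 2 stably constructs the graph language $\mathscr{T}_k=\{G : G \text{ is a rooted tree and every node } u \text{ has } \Delta^+(u)\le k\}$, and under the uniform random scheduler it stabilises to a spanning tree in $\mathscr{T}_k$ within $O(\log n)$ parallel time with high probability.
   Context: Network constructor model: there are $n$ nodes and every pair of nodes may interact. Each node has a state from a finite set $Q$; each of the $n(n-1)/2$ node pairs carries an edge state in $\{0,1\}$ (inactive/active), all initially $0$. At each discrete step the uniform random scheduler picks an unordered pair $\{u,v\}$ uniformly at random among all $n(n-1)/2$ pairs, independently of the past, and the two nodes and their edge are updated by the transition function (applicable with either ordering of the pair); any triple not listed as a rule is left unchanged. All states are output states, so the output graph of a configuration is the graph on all nodes whose edges are the active edges. An execution stabilises to $G$ if from some step on the output graph is always (isomorphic to) $G$; running time is the first such step, and parallel time is the number of steps divided by $n$. A protocol stably constructs a graph language $\mathscr{G}$ if every fair execution stabilises to a graph in $\mathscr{G}$ and every $G\in\mathscr{G}$ is the stabilised output of some execution on $|V(G)|$ nodes (an infinite execution is fair if whenever a configuration $C$ occurs infinitely often, every configuration reachable from $C$ in one step occurs infinitely often). "With high probability" means with probability at least $1-n^{-a}$ for an arbitrarily chosen constant $a>0$. Protocol 2 ($k$-Slot protocol): $Q=\{F,L_0,\dots,L_k,O_0,\dots,O_k\}$, rules $(L_x,F,0)\to(L_{x+1},O_0,1)$ for $x<k$ and $(O_y,F,0)\to(O_{y+1},O_0,1)$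 for $y<k$. When a rule fires, the node moving from $F$ to $O_0$ becomes a child of the other node; the leader is the root; $\Delta^+(u)$ is the number of children of $u$. *)

theory Defs
  imports "HOL-Probability.Probability"
begin

datatype st = Free | Lead nat | Occ nat

text \<open>A configuration: node states (nodes are naturals, only 0..<n used) and
  edge states on unordered pairs (True = active).\<close>
type_synonym cfg = "(nat \<Rightarrow> st) \<times> (nat set \<Rightarrow> bool)"

fun rule :: "nat \<Rightarrow> st \<Rightarrow> st \<Rightarrow> bool \<Rightarrow> (st \<times> st \<times> bool) option" where
  "rule k (Lead x) Free False = (if x < k then Some (Lead (Suc x), Occ 0, True) else None)"
| "rule k (Occ y) Free False = (if y < k then Some (Occ (Suc y), Occ 0, True) else None)"
| "rule k _ _ _ = None"

definition delta :: "nat \<Rightarrow> cfg \<Rightarrow> nat \<Rightarrow> nat \<Rightarrow> cfg" where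
  "delta k c u v =
     (let s = fst c; E = snd c in
      case rule k (s u) (s v) (E {u, v}) of
        Some (a, b, x) \<Rightarrow> (s(u := a, v := b), E({u, v} := x))
      | None \<Rightarrow>
        (case rule k (s v) (s u) (E {u, v}) of
           Some (a, b, x) \<Rightarrow> (s(v := a, u := b), E({u, v} := x))
         | None \<Rightarrow> c))"

definition step :: "nat \<Rightarrow> cfg \<Rightarrow> nat set \<Rightarrow> cfg" where
  "step k c e = delta k c (Min e) (Max e)"

definition pairs :: "nat \<Rightarrow> nat set set" where
  "pairs n = {e. \<exists>u v. u < n \<and> v < n \<and> u \<noteq> v \<and> e = {u, v}}"

definition init :: "nat \<Rightarrow> cfg" where
  "init l = ((\<lambda>u. if u = l then Lead 0 else Free), (\<lambda>e. False))"

definition out :: "cfg \<Rightarrow> nat set set" where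
  "out c = {e. snd c e}"

definition iso :: "nat \<Rightarrow> nat set set \<Rightarrow> nat set set \<Rightarrow> bool" where
  "iso n E1 E2 \<longleftrightarrow> (\<exists>f. bij_betw f {..<n} {..<n} \<and>
      (\<forall>u<n. \<forall>v<n. {u, v} \<in> E1 \<longleftrightarrow> {f u, f v} \<in> E2))"

definition in_Tk :: "nat \<Rightarrow> nat \<Rightarrow> nat set set \<Rightarrow> bool" where
  "in_Tk n k E \<longleftrightarrow> E \<subseteq> pairs n \<and>
     (\<exists>r<n. \<exists>p :: nat \<Rightarrow> nat.
        (\<forall>v<n. v \<noteq> r \<longrightarrow> p v < n \<and> p v \<noteq> v) \<and>
        E = {{v, p v} | v. v < n \<and> v \<noteq> r} \<and>
        (\<forall>v<n. \<exists>m. (p ^^ m) v = r) \<and>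
        (\<forall>u<n. card {v. v < n \<and> v \<noteq> r \<and> p v = u} \<le> k))"

definition execution :: "nat \<Rightarrow> nat \<Rightarrow> nat \<Rightarrow> (nat \<Rightarrow> cfg) \<Rightarrow> bool" where
  "execution n k l C \<longleftrightarrow> C 0 = init l \<and> (\<forall>t. \<exists>e\<in>pairs n. C (Suc t) = step k (C t) e)"

definition fair :: "nat \<Rightarrow> nat \<Rightarrow> (nat \<Rightarrow> cfg) \<Rightarrow> bool" where
  "fair n k C \<longleftrightarrow> (\<forall>c. infinite {t. C t = c} \<longrightarrow>
       (\<forall>e\<in>pairs n. infinite {t. C t = step k c e}))"

definition stable_from :: "nat \<Rightarrow> (nat \<Rightarrow> cfg) \<Rightarrow> nat set set \<Rightarrow> nat \<Rightarrow> bool" where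
  "stable_from n C G T \<longleftrightarrow> (\<forall>t\<ge>T. iso n (out (C t)) G)"

definition stabilises_to :: "nat \<Rightarrow> (nat \<Rightarrow> cfg) \<Rightarrow> nat set set \<Rightarrow> bool" where
  "stabilises_to n C G \<longleftrightarrow> (\<exists>T. stable_from n C G T)"

definition sched :: "nat \<Rightarrow> nat set stream measure" where
  "sched n = stream_space (measure_pmf (pmf_of_set (pairs n)))"

primrec run :: "nat \<Rightarrow> nat \<Rightarrow> nat set stream \<Rightarrow> nat \<Rightarrow> cfg" where
  "run k l s 0 = init l"
| "run k l s (Suc t) = step k (run k l s t) (s !! t)"

end

theory Submission
  imports Defs
begin


definition cnt :: "(nat \<Rightarrow> nat) \<Rightarrow> nat set \<Rightarrow> nat \<Rightarrow> nat" where
  "cnt p S u = card {w\<in>S. p w = u}"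

definition cfgS :: "nat \<Rightarrow> (nat \<Rightarrow> nat) \<Rightarrow> nat set \<Rightarrow> cfg" where
  "cfgS l p S = ((\<lambda>u. if u = l then Lead (cnt p S u) else if u \<in> S then Occ (cnt p S u) else Free),
                 (\<lambda>e. \<exists>w\<in>S. e = {w, p w}))"

lemma rule_SomeD: "rule k q1 q2 E = Some r \<Longrightarrow> q2 = Free \<and> E = False \<and> (\<exists>j<k. q1 = Lead j \<or> q1 = Occ j)"
  by (cases q1; cases q2; cases E) (auto split: if_splits)

lemma cnt_ins:
  assumes "finite S" "v \<notin> S"
  shows "cnt p (insert v S) w = cnt p S w + (if p v = w then 1 else 0)"
proof -
  have "{x\<in>insert v S. p x = w} = (if p v = w then insert v {x\<in>S. p x = w} else {x\<in>S. p x = w})"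
    by auto
  then show ?thesis using assms by (simp add: cnt_def)
qed

lemma cnt_upd: "y \<notin> S \<Longrightarrow> cnt (p(y:=x)) S = cnt p S"
  unfolding cnt_def by (intro ext arg_cong[where f=card]) auto

lemma cfgS_upd: "y \<notin> S \<Longrightarrow> cfgS l (p(y:=x)) S = cfgS l p S"
  unfolding cfgS_def cnt_upd by (auto intro!: ext)

lemma cnt_zero: assumes "\<forall>w\<in>S. p w \<noteq> v" shows "cnt p S v = 0"
proof -
  from assms have "{w\<in>S. p w = v} = {}" by auto
  then have "card {w\<in>S. p w = v} = 0" by (simp only: card.empty)
  then show ?thesis unfolding cnt_def .
qed

lemma step_add:
  assumes fin: "finite S" and vS: "v \<notin> S" and vl: "v \<noteq> l" and pv: "p v \<in> insert l S"
    and pvv: "p v \<noteq> v" and nochild: "\<forall>w\<in>S. p w \<noteq> v" and ck: "cnt p S (p v) < k"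
  shows "step k (cfgS l p S) {v, p v} = cfgS l p (insert v S)"
proof -
  define u where "u = p v"
  define s where "s = fst (cfgS l p S)"
  define E where "E = snd (cfgS l p S)"
  have Euv: "E {v, u} = False" "E {u, v} = False"
    using nochild vS unfolding E_def cfgS_def u_def by (auto simp: doubleton_eq_iff)
  have sv: "s v = Free" using vS vl unfolding s_def cfgS_def by auto
  define A where "A = (if u = l then Lead (Suc (cnt p S u)) else Occ (Suc (cnt p S u)))"
  have su: "rule k (s u) (s v) (E {u, v}) = Some (A, Occ 0, True)"
    using pv ck sv Euv unfolding s_def A_def u_def[symmetric] by (auto simp: cfgS_def)
  have sv2: "rule k (s v) (s u) x = None" for x using sv by simp
  have cnt_new: "cnt p (insert v S) w = cnt p S w + (if u = w then 1 else 0)" for w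
    using cnt_ins[OF fin vS] u_def by simp
  have cv: "cnt p S v = 0" using cnt_zero nochild by blast
  have t1: "fst (cfgS l p (insert v S)) = s(u := A, v := Occ 0)"
  proof
    fix w show "fst (cfgS l p (insert v S)) w = (s(u := A, v := Occ 0)) w"
      unfolding cfgS_def s_def A_def using vl cv pvv u_def cnt_new pv by auto
  qed
  have t2: "snd (cfgS l p (insert v S)) = E({v, u} := True)"
  proof
    fix e show "snd (cfgS l p (insert v S)) e = (E({v, u} := True)) e"
      unfolding cfgS_def E_def using u_def by auto
  qed
  have target: "cfgS l p (insert v S) = (s(u := A, v := Occ 0), E({v, u} := True))"
    using t1 t2 by (metis prod.collapse)
  have "step k (cfgS l p S) {v, u} = (s(u := A, v := Occ 0), E({v, u} := True))"
  proof (cases "v < u")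
    case True
    then have "Min {v, u} = v" "Max {v, u} = u" by auto
    then show ?thesis unfolding step_def delta_def s_def[symmetric] E_def[symmetric]
      using su sv2 by (simp add: Let_def insert_commute)
  next
    case False
    then have "Min {v, u} = u" "Max {v, u} = v" using pvv u_def by auto
    then show ?thesis unfolding step_def delta_def s_def[symmetric] E_def[symmetric]
      using su sv2 pvv u_def by (simp add: Let_def insert_commute fun_upd_twist)
  qed
  then show ?thesis using target u_def by simp
qed

definition InvD :: "nat \<Rightarrow> nat \<Rightarrow> nat \<Rightarrow> (nat \<Rightarrow> nat) \<Rightarrow> nat set \<Rightarrow> (nat \<Rightarrow> nat) \<Rightarrow> bool" where
  "InvD n k l p S d \<longleftrightarrow> S \<subseteq> {..<n} \<and> l \<notin> S \<and> l < n \<and>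
     (\<forall>v\<in>S. p v = l \<or> (p v \<in> S \<and> d (p v) < d v)) \<and> (\<forall>u. cnt p S u \<le> k)"

definition Inv :: "nat \<Rightarrow> nat \<Rightarrow> nat \<Rightarrow> cfg \<Rightarrow> bool" where
  "Inv n k l c \<longleftrightarrow> (\<exists>S p d. c = cfgS l p S \<and> InvD n k l p S d)"

lemma InvD_finite: "InvD n k l p S d \<Longrightarrow> finite S"
  unfolding InvD_def using finite_subset by blast

lemma InvD_par: "InvD n k l p S d \<Longrightarrow> v \<in> S \<Longrightarrow> p v \<in> insert l S \<and> p v \<noteq> v"
  unfolding InvD_def by fastforce

lemma fire:
  assumes I: "InvD n k l p S d" and x: "x \<in> insert l S" and y: "y \<notin> insert l S" "y < n"
    and ck: "cnt p S x < k"
  shows "step k (cfgS l p S) {x, y} = cfgS l (p(y:=x)) (insert y S)"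
    "InvD n k l (p(y:=x)) (insert y S) (d(y := Suc (d x)))"
proof -
  define p' where "p' = p(y:=x)"
  have fin: "finite S" using InvD_finite[OF I] .
  have yS: "y \<notin> S" "y \<noteq> l" using y by auto
  have eq: "cfgS l p S = cfgS l p' S" unfolding p'_def using cfgS_upd[OF yS(1)] by simp
  have nochild: "\<forall>w\<in>S. p' w \<noteq> y"
  proof
    fix w assume w: "w \<in> S"
    then have "w \<noteq> y" using yS by auto
    have "p w \<in> insert l S" using InvD_par[OF I w] by simp
    then have "p w \<noteq> y" using y by blast
    then show "p' w \<noteq> y" using \<open>w \<noteq> y\<close> unfolding p'_def by simp
  qed
  have py: "p' y = x" unfolding p'_def by simp
  have xy: "x \<noteq> y" using x y by auto
  have ck': "cnt p' S (p' y) < k" using ck cnt_upd[OF yS(1)] py unfolding p'_def by simp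
  have "step k (cfgS l p' S) {y, p' y} = cfgS l p' (insert y S)"
    by (rule step_add[OF fin yS(1) yS(2) _ _ nochild ck']) (simp_all only: py x, use xy in simp)
  then show "step k (cfgS l p S) {x, y} = cfgS l (p(y:=x)) (insert y S)"
    using eq unfolding p'_def by (simp add: insert_commute)
  have cnt': "cnt p' (insert y S) u = cnt p S u + (if x = u then 1 else 0)" for u
    using cnt_ins[OF fin yS(1), of p' u] cnt_upd[OF yS(1)] unfolding p'_def by simp
  show "InvD n k l (p(y:=x)) (insert y S) (d(y := Suc (d x)))"
    unfolding p'_def[symmetric] InvD_def
  proof (intro conjI)
    show "insert y S \<subseteq> {..<n}" using I y unfolding InvD_def by auto
    show "l \<notin> insert y S" "l < n" using I y unfolding InvD_def by auto
    show "\<forall>u. cnt p' (insert y S) u \<le> k"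
    proof
      fix u
      have "cnt p S u \<le> k" using I unfolding InvD_def by auto
      then show "cnt p' (insert y S) u \<le> k" using cnt'[of u] ck by auto
    qed
    show "\<forall>v\<in>insert y S. p' v = l \<or> p' v \<in> insert y S \<and> (d(y := Suc (d x))) (p' v) < (d(y := Suc (d x))) v"
    proof
      fix v assume v: "v \<in> insert y S"
      show "p' v = l \<or> p' v \<in> insert y S \<and> (d(y := Suc (d x))) (p' v) < (d(y := Suc (d x))) v"
      proof (cases "v = y")
        case True
        then show ?thesis using x yS unfolding p'_def by auto
      next
        case False
        then have vS: "v \<in> S" using v by auto
        have "p v \<noteq> y" using InvD_par[OF I vS] y by auto
        then show ?thesis using I vS False unfolding InvD_def p'_def by auto
      qed
    qed
  qed
qed

lemma fst_cfgS_Free: "fst (cfgS l p S) y = Free \<longleftrightarrow> y \<notin> insert l S"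
  unfolding cfgS_def by auto

lemma fst_cfgS_Lead: "fst (cfgS l p S) y = Lead j \<Longrightarrow> y = l \<and> j = cnt p S y"
  unfolding cfgS_def by (auto split: if_splits)

lemma fst_cfgS_Occ: "fst (cfgS l p S) y = Occ j \<Longrightarrow> y \<in> S \<and> j = cnt p S y"
  unfolding cfgS_def by (auto split: if_splits)

lemma rule_cfgS_None:
  assumes "\<not> (x \<in> insert l S \<and> y \<notin> insert l S \<and> cnt p S x < k)"
  shows "rule k (fst (cfgS l p S) x) (fst (cfgS l p S) y) E = None"
proof (rule ccontr)
  assume "rule k (fst (cfgS l p S) x) (fst (cfgS l p S) y) E \<noteq> None"
  then obtain r where "rule k (fst (cfgS l p S) x) (fst (cfgS l p S) y) E = Some r" by auto
  from rule_SomeD[OF this] obtain j where j: "fst (cfgS l p S) y = Free" "j < k"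
    "fst (cfgS l p S) x = Lead j \<or> fst (cfgS l p S) x = Occ j" by blast
  have yT: "y \<notin> insert l S" using j(1) fst_cfgS_Free by metis
  have "x \<in> insert l S \<and> cnt p S x < k"
  proof (cases "fst (cfgS l p S) x = Lead j")
    case True
    from fst_cfgS_Lead[OF True] j(2) show ?thesis by auto
  next
    case False
    then have "fst (cfgS l p S) x = Occ j" using j(3) by auto
    from fst_cfgS_Occ[OF this] j(2) show ?thesis by auto
  qed
  then show False using assms yT by blast
qed

lemma delta_None:
  assumes "rule k (fst c u) (fst c v) (snd c {u, v}) = None"
    "rule k (fst c v) (fst c u) (snd c {u, v}) = None"
  shows "delta k c u v = c"
  using assms unfolding delta_def by (simp add: Let_def)

lemma nofire:
  assumes nf: "\<not> (\<exists>x y. {x, y} = {a, b} \<and> x \<in> insert l S \<and> y \<notin> insert l S \<and> cnt p S x < k)"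
  shows "step k (cfgS l p S) {a, b} = cfgS l p S"
proof -
  have N: "rule k (fst (cfgS l p S) x) (fst (cfgS l p S) y) E = None"
    if "{x, y} = {a, b}" for x y E
  proof (rule rule_cfgS_None)
    show "\<not> (x \<in> insert l S \<and> y \<notin> insert l S \<and> cnt p S x < k)" using nf that by blast
  qed
  have mm: "Min {a, b} = min a b" "Max {a, b} = max a b" by auto
  have e1: "{min a b, max a b} = {a, b}" and e2: "{max a b, min a b} = {a, b}" by (auto simp: min_def max_def)
  have "delta k (cfgS l p S) (min a b) (max a b) = cfgS l p S"
    by (rule delta_None) (simp_all only: e1 N e2)
  then show ?thesis unfolding step_def mm .
qed

lemma Inv_init: "l < n \<Longrightarrow> Inv n k l (init l)"
proof -
  assume "l < n"
  have "init l = cfgS l id {}" unfolding init_def cfgS_def cnt_def by auto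
  moreover have "InvD n k l id {} (\<lambda>_. 0)" using \<open>l < n\<close> unfolding InvD_def cnt_def by auto
  ultimately show ?thesis unfolding Inv_def by blast
qed

lemma Inv_step:
  assumes I: "Inv n k l c" and e: "e \<in> pairs n"
  shows "Inv n k l (step k c e)"
proof -
  obtain S p d where c: "c = cfgS l p S" and D: "InvD n k l p S d" using I unfolding Inv_def by blast
  obtain a b where ab: "a < n" "b < n" "a \<noteq> b" "e = {a, b}" using e unfolding pairs_def by blast
  show ?thesis
  proof (cases "\<exists>x y. {x, y} = {a, b} \<and> x \<in> insert l S \<and> y \<notin> insert l S \<and> cnt p S x < k")
    case True
    then obtain x y where xy: "{x, y} = {a, b}" "x \<in> insert l S" "y \<notin> insert l S" "cnt p S x < k" by blast
    have "y < n" using xy(1) ab by (auto simp: doubleton_eq_iff)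
    from fire[OF D xy(2,3) this xy(4)] show ?thesis unfolding Inv_def c ab(4) xy(1)[symmetric] by blast
  next
    case False
    then show ?thesis using nofire[OF False] I c ab(4) by simp
  qed
qed

lemma rule_Some_out: "rule k q1 q2 E = Some (a, b, x) \<Longrightarrow> a \<noteq> Free \<and> b \<noteq> Free"
  by (cases q1; cases q2; cases E) (auto split: if_splits)

lemma delta_Free:
  assumes "fst (delta k c u v) w = Free" shows "fst c w = Free"
proof -
  obtain s E where c: "c = (s, E)" by (cases c)
  show ?thesis
  proof (cases "rule k (s u) (s v) (E {u, v})")
    case None
    show ?thesis
    proof (cases "rule k (s v) (s u) (E {u, v})")
      case None2: None
      then show ?thesis using assms None c unfolding delta_def by (simp add: Let_def)
    next
      case (Some r)
      then obtain a b x where r: "r = (a, b, x)" by (cases r)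
      have "a \<noteq> Free" "b \<noteq> Free" using rule_Some_out Some r by blast+
      then show ?thesis using assms None Some r c unfolding delta_def
        by (simp add: Let_def split: if_splits)
    qed
  next
    case (Some r)
    then obtain a b x where r: "r = (a, b, x)" by (cases r)
    have "a \<noteq> Free" "b \<noteq> Free" using rule_Some_out Some r by blast+
    then show ?thesis using assms Some r c unfolding delta_def
      by (simp add: Let_def split: if_splits)
  qed
qed

lemma step_Free: "fst (step k c e) w = Free \<Longrightarrow> fst c w = Free"
  unfolding step_def by (rule delta_Free)


definition isdone :: "nat \<Rightarrow> cfg \<Rightarrow> bool" where
  "isdone n c \<longleftrightarrow> (\<forall>u<n. fst c u \<noteq> Free)"

definition fc :: "nat \<Rightarrow> cfg \<Rightarrow> nat" where
  "fc n c = card {u. u < n \<and> fst c u = Free}"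

lemma sum_cnt:
  assumes I: "InvD n k l p S d"
  shows "(\<Sum>x\<in>insert l S. cnt p S x) = card S"
proof -
  have fin: "finite S" using InvD_finite[OF I] .
  have U: "(\<Union>x\<in>insert l S. {w\<in>S. p w = x}) = S" using InvD_par[OF I] by blast
  have "card (\<Union>x\<in>insert l S. {w\<in>S. p w = x}) = (\<Sum>x\<in>insert l S. card {w\<in>S. p w = x})"
    by (rule card_UN_disjoint) (use fin in auto)
  then show ?thesis using U unfolding cnt_def by simp
qed

lemma full_bound:
  assumes I: "InvD n k l p S d" and k: "k \<ge> 2"
  shows "2 * card {x\<in>insert l S. k \<le> cnt p S x} \<le> card S"
proof -
  have fin: "finite S" using InvD_finite[OF I] .
  let ?F = "{x\<in>insert l S. k \<le> cnt p S x}"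
  have "2 * card ?F \<le> k * card ?F" using k by simp
  also have "\<dots> = (\<Sum>x\<in>?F. k)" by simp
  also have "\<dots> \<le> (\<Sum>x\<in>?F. cnt p S x)" by (rule sum_mono) auto
  also have "\<dots> \<le> (\<Sum>x\<in>insert l S. cnt p S x)" by (rule sum_mono2) (use fin in auto)
  also have "\<dots> = card S" by (rule sum_cnt[OF I])
  finally show ?thesis .
qed

lemma nonfull_bound:
  assumes I: "InvD n k l p S d" and k: "k \<ge> 2"
  shows "2 * card {x\<in>insert l S. cnt p S x < k} \<ge> card (insert l S) + 1"
proof -
  have fin: "finite S" using InvD_finite[OF I] .
  have lS: "l \<notin> S" using I unfolding InvD_def by auto
  let ?F = "{x\<in>insert l S. k \<le> cnt p S x}"
  let ?N = "{x\<in>insert l S. cnt p S x < k}"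
  have "?N = insert l S - ?F" by auto
  moreover have "card (insert l S - ?F) = card (insert l S) - card ?F"
    by (rule card_Diff_subset) (use fin in auto)
  ultimately have "card ?N = card (insert l S) - card ?F" by simp
  have "card ?F \<le> card (insert l S)" by (rule card_mono) (use fin in auto)
  moreover have "card (insert l S) = card S + 1" using fin lS by simp
  ultimately show ?thesis using full_bound[OF I k] \<open>card ?N = _\<close> by linarith
qed

lemma reach:
  assumes I: "InvD n k l p S d" and v: "v \<in> insert l S"
  shows "\<exists>m. (p ^^ m) v = l"
  using v
proof (induction "d v" arbitrary: v rule: less_induct)
  case less
  show ?case
  proof (cases "v = l")
    case True then show ?thesis by (metis funpow_0)
  next
    case False
    then have vS: "v \<in> S" using less.prems by auto
    then have "p v = l \<or> (p v \<in> S \<and> d (p v) < d v)" using I unfolding InvD_def by auto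
    then obtain m where "(p ^^ m) (p v) = l"
    proof
      assume "p v = l" then show ?thesis using that[of 0] by simp
    next
      assume "p v \<in> S \<and> d (p v) < d v"
      then show ?thesis using less.hyps[of "p v"] that by auto
    qed
    then have "(p ^^ Suc m) v = l" by (simp add: funpow_Suc_right del: funpow.simps)
    then show ?thesis by blast
  qed
qed

lemma done_cfgS:
  assumes I: "InvD n k l p S d" and D: "isdone n (cfgS l p S)"
  shows "insert l S = {..<n}"
  using I D unfolding isdone_def InvD_def fst_cfgS_Free by auto

lemma out_cfgS: "out (cfgS l p S) = {e. \<exists>w\<in>S. e = {w, p w}}"
  unfolding out_def cfgS_def by simp

lemma Inv_done_Tk:
  assumes I: "Inv n k l c" and D: "isdone n c"
  shows "in_Tk n k (out c)"
proof -
  obtain S p d where c: "c = cfgS l p S" and D': "InvD n k l p S d" using I unfolding Inv_def by blast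
  have T: "insert l S = {..<n}" using done_cfgS[OF D'] D c by simp
  have lS: "l \<notin> S" "l < n" using D' unfolding InvD_def by auto
  have S: "S = {..<n} - {l}" using T lS by auto
  have par: "v \<in> S \<Longrightarrow> p v < n \<and> p v \<noteq> v" for v using InvD_par[OF D'] T by auto
  show ?thesis unfolding in_Tk_def
  proof (intro conjI)
    show "out c \<subseteq> pairs n"
      unfolding c out_cfgS pairs_def using par S by blast
    show "\<exists>r<n. \<exists>p. (\<forall>v<n. v \<noteq> r \<longrightarrow> p v < n \<and> p v \<noteq> v) \<and>
        out c = {{v, p v} |v. v < n \<and> v \<noteq> r} \<and>
        (\<forall>v<n. \<exists>m. (p ^^ m) v = r) \<and> (\<forall>u<n. card {v. v < n \<and> v \<noteq> r \<and> p v = u} \<le> k)"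
    proof (intro exI conjI)
      show "l < n" by fact
      show "\<forall>v<n. v \<noteq> l \<longrightarrow> p v < n \<and> p v \<noteq> v" using par S by auto
      show "out c = {{v, p v} |v. v < n \<and> v \<noteq> l}" unfolding c out_cfgS S by blast
      show "\<forall>v<n. \<exists>m. (p ^^ m) v = l" using reach[OF D'] T by auto
      show "\<forall>u<n. card {v. v < n \<and> v \<noteq> l \<and> p v = u} \<le> k"
      proof (intro allI impI)
        fix u
        have "{v. v < n \<and> v \<noteq> l \<and> p v = u} = {w\<in>S. p w = u}" using S by auto
        then show "card {v. v < n \<and> v \<noteq> l \<and> p v = u} \<le> k"
          using D' unfolding InvD_def cnt_def by auto
      qed
    qed
  qed
qed

lemma done_step:
  assumes D: "isdone n c" and e: "e \<in> pairs n"
  shows "step k c e = c"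
proof -
  obtain a b where ab: "a < n" "b < n" "a \<noteq> b" "e = {a, b}" using e unfolding pairs_def by blast
  have N: "rule k (fst c x) (fst c y) E = None" if "x < n" "y < n" for x y E
  proof (rule ccontr)
    assume "rule k (fst c x) (fst c y) E \<noteq> None"
    then obtain r where "rule k (fst c x) (fst c y) E = Some r" by auto
    from rule_SomeD[OF this] have "fst c y = Free" by blast
    then show False using D that unfolding isdone_def by auto
  qed
  have mm: "Min {a, b} = min a b" "Max {a, b} = max a b" by auto
  have "delta k c (min a b) (max a b) = c"
    by (rule delta_None) (rule N, use ab in auto)+
  then show ?thesis unfolding step_def ab(4) mm .
qed

lemma done_mono: "isdone n c \<Longrightarrow> isdone n (step k c e)"
  unfolding isdone_def using step_Free by blast

lemma free_cfgS: "{u. u < n \<and> fst (cfgS l p S) u = Free} = {u. u < n \<and> u \<notin> insert l S}"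
  using fst_cfgS_Free by blast

lemma fc_mono: "fc n (step k c e) \<le> fc n c"
  unfolding fc_def by (rule card_mono) (auto dest: step_Free)

lemma step_cases:
  assumes D: "InvD n k l p S d" and e: "e \<in> pairs n"
  shows "step k (cfgS l p S) e = cfgS l p S \<or> fc n (step k (cfgS l p S) e) < fc n (cfgS l p S)"
proof -
  obtain a b where ab: "a < n" "b < n" "a \<noteq> b" "e = {a, b}" using e unfolding pairs_def by blast
  show ?thesis
  proof (cases "\<exists>x y. {x, y} = {a, b} \<and> x \<in> insert l S \<and> y \<notin> insert l S \<and> cnt p S x < k")
    case True
    then obtain x y where xy: "{x, y} = {a, b}" "x \<in> insert l S" "y \<notin> insert l S" "cnt p S x < k" by blast
    have yn: "y < n" using xy(1) ab by (auto simp: doubleton_eq_iff)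
    have st: "step k (cfgS l p S) e = cfgS l (p(y:=x)) (insert y S)"
      using fire(1)[OF D xy(2,3) yn xy(4)] ab(4) xy(1) by simp
    have "{u. u < n \<and> u \<notin> insert l (insert y S)} \<subset> {u. u < n \<and> u \<notin> insert l S}"
      using yn xy(3) by auto
    then have "card {u. u < n \<and> u \<notin> insert l (insert y S)} < card {u. u < n \<and> u \<notin> insert l S}"
      by (rule psubset_card_mono[rotated]) simp
    then show ?thesis unfolding fc_def st free_cfgS by simp
  next
    case False
    then show ?thesis using nofire[OF False] ab(4) by simp
  qed
qed

lemma nonfull_exists:
  assumes I: "InvD n k l p S d" and k: "k \<ge> 2"
  shows "\<exists>x\<in>insert l S. cnt p S x < k"
proof -
  have "card {x\<in>insert l S. cnt p S x < k} > 0" using nonfull_bound[OF I k] by linarith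
  then show ?thesis by (metis (no_types, lifting) card_gt_0_iff empty_Collect_eq)
qed

lemma notdone_progress:
  assumes I: "InvD n k l p S d" and k: "k \<ge> 2" and nd: "\<not> isdone n (cfgS l p S)"
  shows "\<exists>e\<in>pairs n. step k (cfgS l p S) e \<noteq> cfgS l p S"
proof -
  obtain y where y: "y < n" "y \<notin> insert l S" using nd unfolding isdone_def fst_cfgS_Free by auto
  obtain x where x: "x \<in> insert l S" "cnt p S x < k" using nonfull_exists[OF I k] by blast
  have st: "step k (cfgS l p S) {x, y} = cfgS l (p(y:=x)) (insert y S)"
    using fire(1)[OF I x(1) y(2) y(1) x(2)] .
  have "fst (cfgS l (p(y:=x)) (insert y S)) y \<noteq> Free" unfolding fst_cfgS_Free by simp
  moreover have "fst (cfgS l p S) y = Free" unfolding fst_cfgS_Free using y by simp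
  ultimately have "step k (cfgS l p S) {x, y} \<noteq> cfgS l p S" using st by auto
  moreover have "{x, y} \<in> pairs n" unfolding pairs_def using x y I unfolding InvD_def by auto
  ultimately show ?thesis by blast
qed


lemma exec_Inv:
  assumes l: "l < n" and E: "execution n k l C"
  shows "Inv n k l (C t)"
proof (induction t)
  case 0 then show ?case using E Inv_init[OF l] unfolding execution_def by simp
next
  case (Suc t)
  obtain e where "e \<in> pairs n" "C (Suc t) = step k (C t) e" using E unfolding execution_def by blast
  then show ?case using Inv_step[OF Suc] by simp
qed

lemma nat_antimono_stab:
  fixes f :: "nat \<Rightarrow> nat"
  assumes "\<And>t. f (Suc t) \<le> f t"
  shows "\<exists>T. \<forall>t\<ge>T. f t = f T"
proof -
  have fin: "finite (range f)"
  proof (rule finite_subset)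
    show "range f \<subseteq> {..f 0}" using lift_Suc_antimono_le[of f, OF assms] by auto
  qed simp
  obtain T where T: "f T = Min (range f)" using Min_in[OF fin] by auto
  have "f t = f T" if "t \<ge> T" for t
  proof -
    have "f t \<le> f T" using lift_Suc_antimono_le[of f, OF assms that] .
    moreover have "f T \<le> f t" unfolding T using fin by simp
    ultimately show ?thesis by simp
  qed
  then show ?thesis by blast
qed

lemma iso_refl: "iso n E E"
  unfolding iso_def by (rule exI[of _ id]) auto

lemma fair_part:
  assumes k: "k \<ge> 2" and l: "l < n" and E: "execution n k l C" and F: "fair n k C"
  shows "\<exists>G. in_Tk n k G \<and> stabilises_to n C G"
proof -
  have I: "Inv n k l (C t)" for t by (rule exec_Inv[OF l E])
  have step: "\<exists>e\<in>pairs n. C (Suc t) = step k (C t) e" for t using E unfolding execution_def by blast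
  have "fc n (C (Suc t)) \<le> fc n (C t)" for t using step[of t] fc_mono by metis
  then obtain T where T: "\<forall>t\<ge>T. fc n (C t) = fc n (C T)" using nat_antimono_stab[of "\<lambda>t. fc n (C t)"] by blast
  have same: "C (Suc t) = C t" if "t \<ge> T" for t
  proof -
    obtain e where e: "e \<in> pairs n" "C (Suc t) = step k (C t) e" using step[of t] by blast
    obtain S p d where c: "C t = cfgS l p S" and D: "InvD n k l p S d" using I[of t] unfolding Inv_def by blast
    have a: "fc n (C t) = fc n (C T)" using T that by blast
    have b: "fc n (C (Suc t)) = fc n (C T)" using T that le_SucI by blast
    from a b have "fc n (C (Suc t)) = fc n (C t)" by (simp only:)
    moreover have "step k (C t) e = C t \<or> fc n (step k (C t) e) < fc n (C t)"
      using step_cases[OF D e(1)] unfolding c .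
    ultimately show ?thesis using e(2) by auto
  qed
  have const: "C t = C T" if "t \<ge> T" for t
    using that
  proof (induction t rule: dec_induct)
    case (step m) then show ?case using same[of m] by simp
  qed simp
  have inf: "infinite {t. C t = C T}"
    unfolding infinite_nat_iff_unbounded_le
  proof
    fix m show "\<exists>t\<ge>m. t \<in> {t. C t = C T}"
      using const[of "max m T"] by (intro exI[of _ "max m T"]) auto
  qed
  have fx: "step k (C T) e = C T" if e: "e \<in> pairs n" for e
  proof -
    have "infinite {t. C t = step k (C T) e}" using F inf e unfolding fair_def by blast
    then obtain t where "t \<ge> T" "C t = step k (C T) e" unfolding infinite_nat_iff_unbounded_le by blast
    then show ?thesis using const[of t] by simp
  qed
  have dn: "isdone n (C T)"
  proof (rule ccontr)
    assume nd: "\<not> isdone n (C T)"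
    obtain S p d where c: "C T = cfgS l p S" and D: "InvD n k l p S d" using I[of T] unfolding Inv_def by blast
    from notdone_progress[OF D k] nd c fx show False by auto
  qed
  have "in_Tk n k (out (C T))" by (rule Inv_done_Tk[OF I dn])
  moreover have "stabilises_to n C (out (C T))"
    unfolding stabilises_to_def stable_from_def
  proof (intro exI allI impI)
    fix t assume "T \<le> t"
    then show "iso n (out (C t)) (out (C T))" using const[of t] iso_refl by simp
  qed
  ultimately show ?thesis by blast
qed


definition TR :: "nat \<Rightarrow> nat \<Rightarrow> nat \<Rightarrow> (nat \<Rightarrow> nat) \<Rightarrow> bool" where
  "TR n k l q \<longleftrightarrow> l < n \<and> (\<forall>v<n. v \<noteq> l \<longrightarrow> q v < n \<and> q v \<noteq> v) \<and>
     (\<forall>v<n. \<exists>m. (q ^^ m) v = l) \<and> (\<forall>u<n. card {v. v < n \<and> v \<noteq> l \<and> q v = u} \<le> k)"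

definition dp :: "nat \<Rightarrow> (nat \<Rightarrow> nat) \<Rightarrow> nat \<Rightarrow> nat" where
  "dp l q v = (LEAST m. (q ^^ m) v = l)"

lemma dp_lt:
  assumes T: "TR n k l q" and v: "v < n" "v \<noteq> l"
  shows "dp l q (q v) < dp l q v"
proof -
  have ex: "\<exists>m. (q ^^ m) v = l" using T v unfolding TR_def by auto
  have h: "(q ^^ dp l q v) v = l" unfolding dp_def by (rule LeastI_ex[OF ex])
  have "dp l q v \<noteq> 0" using h v by (metis funpow_0)
  then obtain m where m: "dp l q v = Suc m" by (cases "dp l q v") auto
  have "(q ^^ m) (q v) = l" using h m by (simp add: funpow_Suc_right del: funpow.simps)
  then have "dp l q (q v) \<le> m" unfolding dp_def by (rule Least_le)
  then show ?thesis using m by simp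
qed

lemma cfgS_empty: "cfgS l q {} = init l"
  unfolding init_def cfgS_def cnt_def by auto

lemma build:
  assumes T: "TR n k l q"
  shows "S \<subseteq> {..<n} - {l} \<Longrightarrow> (\<forall>v\<in>S. q v \<in> insert l S) \<Longrightarrow>
    \<exists>es. set es \<subseteq> pairs n \<and> foldl (step k) (init l) es = cfgS l q S"
proof (induction "card S" arbitrary: S rule: less_induct)
  case less
  have fin: "finite S" using less.prems(1) finite_subset by blast
  show ?case
  proof (cases "S = {}")
    case True
    then show ?thesis using cfgS_empty by (intro exI[of _ "[]"]) auto
  next
    case False
    define M where "M = Max (dp l q ` S)"
    have "M \<in> dp l q ` S" unfolding M_def using fin False by (intro Max_in) auto
    then obtain v where vS: "v \<in> S" and vM: "dp l q v = M" by auto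
    have maxd: "dp l q w \<le> M" if "w \<in> S" for w unfolding M_def using fin that by simp
    define S' where "S' = S - {v}"
    have vn: "v < n" "v \<noteq> l" using vS less.prems(1) by auto
    have nochild: "\<forall>w\<in>S'. q w \<noteq> v"
    proof
      fix w assume w: "w \<in> S'"
      then have wn: "w < n" "w \<noteq> l" using less.prems(1) unfolding S'_def by auto
      show "q w \<noteq> v"
      proof
        assume "q w = v"
        then have "dp l q v < dp l q w" using dp_lt[OF T wn] by simp
        then show False using maxd[of w] w vM unfolding S'_def by simp
      qed
    qed
    have S'sub: "S' \<subseteq> {..<n} - {l}" using less.prems(1) unfolding S'_def by auto
    have S'cl: "\<forall>w\<in>S'. q w \<in> insert l S'" using less.prems(2) nochild unfolding S'_def by auto
    have "card S' < card S" unfolding S'_def using vS fin by (metis card_Diff1_less)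
    then obtain es where es: "set es \<subseteq> pairs n" "foldl (step k) (init l) es = cfgS l q S'"
      using less.hyps S'sub S'cl by blast
    have finS': "finite S'" using fin unfolding S'_def by simp
    have v'S: "v \<notin> S'" unfolding S'_def by simp
    have qv: "q v \<in> insert l S'" using less.prems(2) vS nochild vn
      unfolding S'_def by (metis TR_def T insertE insert_Diff_single insert_iff vn)
    have qvv: "q v \<noteq> v" using T vn unfolding TR_def by auto
    have qvn: "q v < n" using T vn unfolding TR_def by auto
    have "cnt q S' (q v) < card {x. x < n \<and> x \<noteq> l \<and> q x = q v}"
    proof -
      have sub: "{w\<in>S'. q w = q v} \<subset> {x. x < n \<and> x \<noteq> l \<and> q x = q v}"
        using S'sub vn v'S by auto
      show ?thesis unfolding cnt_def by (rule psubset_card_mono[OF _ sub]) simp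
    qed
    also have "\<dots> \<le> k" using T qvn unfolding TR_def by auto
    finally have ck: "cnt q S' (q v) < k" .
    have st: "step k (cfgS l q S') {v, q v} = cfgS l q (insert v S')"
      by (rule step_add[OF finS' v'S vn(2) qv qvv nochild ck])
    have "insert v S' = S" unfolding S'_def using vS by auto
    moreover have "{v, q v} \<in> pairs n" unfolding pairs_def using vn qvn qvv by blast
    ultimately show ?thesis using es st
      by (intro exI[of _ "es @ [{v, q v}]"]) auto
  qed
qed

primrec runf :: "nat \<Rightarrow> nat \<Rightarrow> (nat \<Rightarrow> nat set) \<Rightarrow> nat \<Rightarrow> cfg" where
  "runf k l eg 0 = init l"
| "runf k l eg (Suc t) = step k (runf k l eg t) (eg t)"

lemma runf_take:
  assumes "t \<le> length es" "\<And>t. t < length es \<Longrightarrow> eg t = es ! t"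
  shows "runf k l eg t = foldl (step k) (init l) (take t es)"
  using assms(1)
proof (induction t)
  case (Suc t)
  then have "t < length es" by simp
  then have "take (Suc t) es = take t es @ [es ! t]" by (rule take_Suc_conv_app_nth)
  then show ?case using Suc assms(2)[of t] \<open>t < length es\<close> by simp
qed simp

lemma build_exec:
  assumes T: "TR n k l q" and n: "n \<ge> 2"
  shows "\<exists>C. execution n k l C \<and> stabilises_to n C (out (cfgS l q ({..<n} - {l})))"
proof -
  define S where "S = {..<n} - {l}"
  have ln: "l < n" using T unfolding TR_def by auto
  have cl: "\<forall>v\<in>S. q v \<in> insert l S" using T unfolding S_def TR_def by auto
  obtain es where es: "set es \<subseteq> pairs n" "foldl (step k) (init l) es = cfgS l q S"
    using build[OF T _ cl] unfolding S_def by blast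
  define e0 where "e0 = {0::nat, 1}"
  have e0: "e0 \<in> pairs n" unfolding e0_def pairs_def using n by (intro CollectI exI[of _ 0] exI[of _ 1]) auto
  define eg where "eg t = (if t < length es then es ! t else e0)" for t
  define C where "C = runf k l eg"
  have egp: "eg t \<in> pairs n" for t unfolding eg_def using es(1) e0 by auto
  have ex: "execution n k l C" unfolding execution_def C_def using egp by auto
  have CL: "C (length es) = cfgS l q S" unfolding C_def using runf_take[of "length es" es eg k l] es(2)
    unfolding eg_def by simp
  have dn: "isdone n (cfgS l q S)" unfolding isdone_def fst_cfgS_Free S_def by auto
  have "C t = cfgS l q S" if "t \<ge> length es" for t
    using that
  proof (induction t rule: dec_induct)
    case (step m)
    have "C (Suc m) = step k (C m) (eg m)" unfolding C_def by simp
    also have "\<dots> = step k (cfgS l q S) (eg m)" using step.IH by simp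
    also have "\<dots> = cfgS l q S" by (rule done_step[OF dn egp])
    finally show ?case .
  qed (rule CL)
  then have "stabilises_to n C (out (cfgS l q S))"
    unfolding stabilises_to_def stable_from_def
    by (intro exI[of _ "length es"] allI impI) (simp add: iso_def, rule exI[of _ id], simp)
  then show ?thesis using ex unfolding S_def by blast
qed


lemma relabel:
  assumes G: "in_Tk n k G" and ln: "l < n"
  shows "\<exists>q. TR n k l q \<and> iso n (out (cfgS l q ({..<n} - {l}))) G"
proof -
  obtain r p where rn: "r < n" and par: "\<forall>v<n. v \<noteq> r \<longrightarrow> p v < n \<and> p v \<noteq> v"
    and GE: "G = {{v, p v} | v. v < n \<and> v \<noteq> r}" and rch: "\<forall>v<n. \<exists>m. (p ^^ m) v = r"
    and ch: "\<forall>u<n. card {v. v < n \<and> v \<noteq> r \<and> p v = u} \<le> k"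
    using G unfolding in_Tk_def by blast
  define sw where "sw x = (if x = l then r else if x = r then l else x)" for x
  have sw2[simp]: "sw (sw x) = x" for x unfolding sw_def by auto
  have swn: "x < n \<Longrightarrow> sw x < n" for x unfolding sw_def using rn ln by auto
  have swl: "sw x = l \<longleftrightarrow> x = r" for x unfolding sw_def by auto
  have swr: "sw x = r \<longleftrightarrow> x = l" for x unfolding sw_def by auto
  have swinj: "sw x = sw y \<longleftrightarrow> x = y" for x y by (metis sw2)
  define q where "q v = sw (p (sw v))" for v
  have qpow: "(q ^^ m) v = sw ((p ^^ m) (sw v))" for m v
    by (induction m) (simp_all add: q_def)
  have TRq: "TR n k l q" unfolding TR_def
  proof (intro conjI)
    show "l < n" by fact
    show "\<forall>v<n. v \<noteq> l \<longrightarrow> q v < n \<and> q v \<noteq> v"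
    proof (intro allI impI)
      fix v assume v: "v < n" and vl: "v \<noteq> l"
      have "sw v \<noteq> r" using vl swr by simp
      then have "p (sw v) < n" "p (sw v) \<noteq> sw v" using par swn[OF v] by auto
      then show "q v < n \<and> q v \<noteq> v" unfolding q_def using swn swinj by (metis sw2)
    qed
    show "\<forall>v<n. \<exists>m. (q ^^ m) v = l"
    proof (intro allI impI)
      fix v assume v: "v < n"
      obtain m where "(p ^^ m) (sw v) = r" using rch swn[OF v] by blast
      then show "\<exists>m. (q ^^ m) v = l" using qpow swl by metis
    qed
    show "\<forall>u<n. card {v. v < n \<and> v \<noteq> l \<and> q v = u} \<le> k"
    proof (intro allI impI)
    fix u assume u: "u < n"
    have eq: "{v. v < n \<and> v \<noteq> l \<and> q v = u} = sw ` {w. w < n \<and> w \<noteq> r \<and> p w = sw u}"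
    proof (rule set_eqI)
      fix v
      show "v \<in> {v. v < n \<and> v \<noteq> l \<and> q v = u} \<longleftrightarrow> v \<in> sw ` {w. w < n \<and> w \<noteq> r \<and> p w = sw u}"
      proof
        assume "v \<in> {v. v < n \<and> v \<noteq> l \<and> q v = u}"
        then have h: "v < n" "v \<noteq> l" "q v = u" by auto
        have "sw v \<in> {w. w < n \<and> w \<noteq> r \<and> p w = sw u}"
        proof -
          have a: "sw v < n" using swn h(1) by simp
          have b: "sw v \<noteq> r" using swr h(2) by simp
          have "sw (q v) = sw u" using h(3) by simp
          then have c: "p (sw v) = sw u" unfolding q_def by simp
          show ?thesis using a b c by simp
        qed
        then have "sw (sw v) \<in> sw ` {w. w < n \<and> w \<noteq> r \<and> p w = sw u}" by (rule imageI)
        then show "v \<in> sw ` {w. w < n \<and> w \<noteq> r \<and> p w = sw u}" by simp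
      next
        assume "v \<in> sw ` {w. w < n \<and> w \<noteq> r \<and> p w = sw u}"
        then obtain w where w: "w < n" "w \<noteq> r" "p w = sw u" "v = sw w" by auto
        then show "v \<in> {v. v < n \<and> v \<noteq> l \<and> q v = u}"
          using swn swl unfolding q_def by auto
      qed
    qed
    have "card {v. v < n \<and> v \<noteq> l \<and> q v = u} = card {w. w < n \<and> w \<noteq> r \<and> p w = sw u}"
      unfolding eq by (rule card_image) (rule inj_onI, metis sw2)
    also have "\<dots> \<le> k" using ch swn[OF u] by auto
    finally show "card {v. v < n \<and> v \<noteq> l \<and> q v = u} \<le> k" .
  qed
  qed
  have bij: "bij_betw sw {..<n} {..<n}"
  proof (rule bij_betw_byWitness[where f'=sw])
  qed (auto simp: swn)
  have img: "sw ` {a, b} = {sw a, sw b}" for a b by simp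
  have iso: "iso n (out (cfgS l q ({..<n} - {l}))) G"
    unfolding iso_def
  proof (intro exI conjI allI impI)
    show "bij_betw sw {..<n} {..<n}" by fact
    fix u v assume u: "u < n" and v: "v < n"
    show "{u, v} \<in> out (cfgS l q ({..<n} - {l})) \<longleftrightarrow> {sw u, sw v} \<in> G"
    proof
      assume "{u, v} \<in> out (cfgS l q ({..<n} - {l}))"
      then obtain w where w: "w < n" "w \<noteq> l" "{u, v} = {w, q w}" unfolding out_cfgS by auto
      have "sw ` {u, v} = sw ` {w, q w}" using w(3) by simp
      then have "{sw u, sw v} = {sw w, p (sw w)}" unfolding img q_def by simp
      moreover have "sw w < n" "sw w \<noteq> r" using swn w swr by auto
      ultimately show "{sw u, sw v} \<in> G" unfolding GE by blast
    next
      assume "{sw u, sw v} \<in> G"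
      then obtain x where x: "x < n" "x \<noteq> r" "{sw u, sw v} = {x, p x}" unfolding GE by auto
      have "sw ` {sw u, sw v} = sw ` {x, p x}" using x(3) by simp
      then have "{u, v} = {sw x, q (sw x)}" unfolding img q_def by simp
      moreover have "sw x < n" "sw x \<noteq> l" using swn x swl by auto
      ultimately show "{u, v} \<in> out (cfgS l q ({..<n} - {l}))" unfolding out_cfgS by blast
    qed
  qed
  show ?thesis using TRq iso by blast
qed

lemma exist_part:
  assumes G: "in_Tk n k G" and ln: "l < n" and n: "n \<ge> 2"
  shows "\<exists>C. execution n k l C \<and> stabilises_to n C G"
proof -
  obtain q where T: "TR n k l q" and I: "iso n (out (cfgS l q ({..<n} - {l}))) G"
    using relabel[OF G ln] by blast
  obtain C where C: "execution n k l C" "stabilises_to n C (out (cfgS l q ({..<n} - {l})))"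
    using build_exec[OF T n] by blast
  then obtain T0 where T0: "\<forall>t\<ge>T0. iso n (out (C t)) (out (cfgS l q ({..<n} - {l})))"
    unfolding stabilises_to_def stable_from_def by blast
  have "iso n (out (C t)) G" if "t \<ge> T0" for t
  proof -
    from T0 that obtain f where f: "bij_betw f {..<n} {..<n}"
      "\<forall>u<n. \<forall>v<n. {u, v} \<in> out (C t) \<longleftrightarrow> {f u, f v} \<in> out (cfgS l q ({..<n} - {l}))"
      unfolding iso_def by blast
    from I obtain g where g: "bij_betw g {..<n} {..<n}"
      "\<forall>u<n. \<forall>v<n. {u, v} \<in> out (cfgS l q ({..<n} - {l})) \<longleftrightarrow> {g u, g v} \<in> G"
      unfolding iso_def by blast
    have "bij_betw (g \<circ> f) {..<n} {..<n}" using f(1) g(1) by (rule bij_betw_trans)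
    moreover have "\<forall>u<n. \<forall>v<n. {u, v} \<in> out (C t) \<longleftrightarrow> {(g \<circ> f) u, (g \<circ> f) v} \<in> G"
      using f g bij_betwE[OF f(1)] by simp
    ultimately show ?thesis unfolding iso_def by blast
  qed
  then show ?thesis using C(1) unfolding stabilises_to_def stable_from_def by blast
qed


primrec runc :: "nat \<Rightarrow> cfg \<Rightarrow> nat set stream \<Rightarrow> nat \<Rightarrow> cfg" where
  "runc k c s 0 = c"
| "runc k c s (Suc t) = runc k (step k c (shd s)) (stl s) t"

lemma runc_Suc': "runc k c s (Suc t) = step k (runc k c s t) (s !! t)"
  by (induction t arbitrary: c s) simp_all

lemma run_runc: "run k l s t = runc k (init l) s t"
  by (induction t) (simp_all add: runc_Suc' del: runc.simps(2))

lemma pred_runc: "Measurable.pred (stream_space (measure_pmf p)) (\<lambda>s. P (runc k c s t))"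
proof (induction t arbitrary: c P)
  case 0
  then show ?case by simp
next
  case (Suc t)
  have eq: "(\<lambda>s. P (runc k c s (Suc t))) =
    (\<lambda>s. \<exists>a b. Min (shd s) = a \<and> Max (shd s) = b \<and> P (runc k (delta k c a b) (stl s) t))"
    by (simp add: step_def)
  have m1: "Measurable.pred (stream_space (measure_pmf p)) (\<lambda>s. Min (shd s) = a)" for a :: nat
    by (rule measurable_compose[OF measurable_shd]) simp
  have m2: "Measurable.pred (stream_space (measure_pmf p)) (\<lambda>s. Max (shd s) = a)" for a :: nat
    by (rule measurable_compose[OF measurable_shd]) simp
  have m3: "Measurable.pred (stream_space (measure_pmf p)) (\<lambda>s. P (runc k (delta k c a b) (stl s) t))" for a b
    by (rule measurable_compose[OF measurable_stl Suc.IH])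
  show ?case unfolding eq
    by (intro pred_intros_countable pred_intros_logic m1 m2 m3)
qed

lemma sets_runc: "{s \<in> space (stream_space (measure_pmf p)). P (runc k c s t)} \<in> sets (stream_space (measure_pmf p))"
  using pred_runc unfolding pred_def .


definition xx :: "nat \<Rightarrow> nat \<Rightarrow> real" where
  "xx n i = real n / (4 * (real n - real i) * real i)"

primrec psi :: "nat \<Rightarrow> nat \<Rightarrow> real" where
  "psi n 0 = 1"
| "psi n (Suc r) = psi n r / (1 - xx n (Suc r))"

lemma xx_bounds:
  assumes n: "n \<ge> 2" and i: "1 \<le> i" "i < n"
  shows "0 < xx n i" "xx n i \<le> 1/2"
proof -
  have a: "real n - real i \<ge> 1" using i by linarith
  have b: "real i \<ge> 1" using i by simp
  have pos: "4 * (real n - real i) * real i > 0" using a b by simp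
  show "0 < xx n i" unfolding xx_def using pos n by simp
  have "(real n - real i) * real i - (real n - 1) = (real i - 1) * (real n - real i - 1)"
    by (simp add: algebra_simps)
  also have "\<dots> \<ge> 0" using a b by simp
  finally have c: "(real n - real i) * real i \<ge> real n - 1" by simp
  have "real n \<le> 2 * (real n - 1)" using n by simp
  moreover have "2 * (real n - 1) \<le> 2 * ((real n - real i) * real i)" using c by simp
  ultimately have "real n \<le> 2 * ((real n - real i) * real i)" by (rule order_trans)
  then show "xx n i \<le> 1/2" unfolding xx_def using pos by (simp add: field_simps)
qed

lemma psi_ge1: "n \<ge> 2 \<Longrightarrow> r < n \<Longrightarrow> psi n r \<ge> 1"
proof (induction r)
  case (Suc r)
  have x: "0 < xx n (Suc r)" "xx n (Suc r) \<le> 1/2" using xx_bounds[of n "Suc r"] Suc.prems by auto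
  have "psi n r \<ge> 1" using Suc by simp
  moreover have "psi n r \<le> psi n r / (1 - xx n (Suc r))"
    using x \<open>psi n r \<ge> 1\<close> by (simp add: field_simps)
  ultimately show ?case by simp
qed simp

lemma psi_Suc_ge: "n \<ge> 2 \<Longrightarrow> Suc r < n \<Longrightarrow> psi n r \<le> psi n (Suc r)"
proof -
  assume n: "n \<ge> 2" and r: "Suc r < n"
  have x: "0 < xx n (Suc r)" "xx n (Suc r) \<le> 1/2" using xx_bounds[of n "Suc r"] n r by auto
  have "psi n r \<ge> 1" using psi_ge1 n r by simp
  then show ?thesis using x by (simp add: field_simps)
qed

lemma psi_mono: "n \<ge> 2 \<Longrightarrow> r' \<le> r \<Longrightarrow> r < n \<Longrightarrow> psi n r' \<le> psi n r"
proof (induction r)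
  case (Suc r)
  show ?case
  proof (cases "r' = Suc r")
    case False
    then have "psi n r' \<le> psi n r" using Suc by simp
    also have "\<dots> \<le> psi n (Suc r)" using psi_Suc_ge Suc.prems by simp
    finally show ?thesis .
  qed simp
qed simp

lemma psi_rec:
  assumes "n \<ge> 2" "1 \<le> r" "r < n"
  shows "psi n (r - 1) = psi n r * (1 - xx n r)"
proof -
  obtain r' where r: "r = Suc r'" using assms by (cases r) auto
  have "xx n r \<le> 1/2" using xx_bounds assms by auto
  then show ?thesis unfolding r by simp
qed

lemma psi_exp: "n \<ge> 2 \<Longrightarrow> r < n \<Longrightarrow> psi n r \<le> exp (2 * (\<Sum>i=1..r. xx n i))"
proof (induction r)
  case (Suc r)
  have x: "0 < xx n (Suc r)" "xx n (Suc r) \<le> 1/2" using xx_bounds[of n "Suc r"] Suc.prems by auto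
  have p: "psi n r \<ge> 1" using psi_ge1 Suc.prems by simp
  have "1 / (1 - xx n (Suc r)) \<le> 1 + 2 * xx n (Suc r)"
    using x by (simp add: field_simps)
  also have "\<dots> \<le> exp (2 * xx n (Suc r))" by (rule exp_ge_add_one_self)
  finally have q: "1 / (1 - xx n (Suc r)) \<le> exp (2 * xx n (Suc r))" .
  have "psi n (Suc r) = psi n r * (1 / (1 - xx n (Suc r)))" by simp
  also have "\<dots> \<le> exp (2 * (\<Sum>i=1..r. xx n i)) * exp (2 * xx n (Suc r))"
    using Suc p q x by (intro mult_mono) auto
  also have "\<dots> = exp (2 * (\<Sum>i=1..Suc r. xx n i))"
    by (simp add: exp_add[symmetric] algebra_simps)
  finally show ?case .
qed simp

lemma sum_xx:
  assumes n: "n \<ge> 2"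
  shows "2 * (\<Sum>i=1..n-1. xx n i) = harm (n - 1)"
proof -
  have h: "2 * xx n i = (1 / real i + 1 / (real n - real i)) / 2" if "i \<in> {1..n-1}" for i
  proof -
    have a: "real n - real i \<noteq> 0" "real i \<noteq> 0" using that n by auto
    show ?thesis unfolding xx_def using a by (simp add: field_simps)
  qed
  have "2 * (\<Sum>i=1..n-1. xx n i) = (\<Sum>i=1..n-1. 2 * xx n i)"
    by (simp add: sum_distrib_left)
  also have "\<dots> = (\<Sum>i=1..n-1. (1 / real i + 1 / (real n - real i)) / 2)"
    by (rule sum.cong[OF refl h])
  also have "\<dots> = ((\<Sum>i=1..n-1. 1 / real i) + (\<Sum>i=1..n-1. 1 / (real n - real i))) / 2"
    by (simp only: sum_divide_distrib[symmetric] sum.distrib)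
  also have "(\<Sum>i=1..n-1. 1 / (real n - real i)) = (\<Sum>i=1..n-1. 1 / real i)"
  proof (rule sum.reindex_bij_witness[of _ "\<lambda>i. n - i" "\<lambda>i. n - i"])
  qed (use n in \<open>auto simp: of_nat_diff\<close>)
  also have "(\<Sum>i=1..n-1. 1 / real i) = harm (n - 1)"
    unfolding harm_def by (simp add: divide_inverse)
  finally show ?thesis by simp
qed

lemma harm_le_ln: "n \<ge> 1 \<Longrightarrow> harm n \<le> 1 + ln (real n)"
  using euler_mascheroni_sequence_decreasing[of 1 n] by (simp add: harm_def)

lemma psi_final:
  assumes n: "n \<ge> 2"
  shows "psi n (n - 1) \<le> exp 1 * real n"
proof -
  have "psi n (n - 1) \<le> exp (harm (n - 1))" using psi_exp[of n "n - 1"] sum_xx[OF n] n by simp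
  also have "\<dots> \<le> exp (1 + ln (real n))"
  proof -
    have "harm (n - 1) \<le> 1 + ln (real (n - 1))" using harm_le_ln[of "n - 1"] n by simp
    also have "\<dots> \<le> 1 + ln (real n)" using n by simp
    finally show ?thesis by simp
  qed
  also have "\<dots> = exp 1 * real n" using n by (simp add: exp_add)
  finally show ?thesis .
qed


abbreviation MP :: "nat \<Rightarrow> nat set measure" where
  "MP n \<equiv> measure_pmf (pmf_of_set (pairs n))"

definition th :: "nat \<Rightarrow> real" where "th n = 1 / (8 * real n)"

lemma pairs_finite: "finite (pairs n)"
proof (rule finite_subset)
  show "pairs n \<subseteq> Pow {..<n}" unfolding pairs_def by auto
qed simp

lemma pairs_ne': assumes "n \<ge> 2" shows "pairs n \<noteq> {}"
proof -
  have "{0, 1} \<in> pairs n" unfolding pairs_def using assms by (intro CollectI exI[of _ 0] exI[of _ 1]) auto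
  then show ?thesis by auto
qed

lemma card_pairs_le: "card (pairs n) \<le> n * n"
proof -
  have "pairs n \<subseteq> (\<lambda>(u, v). {u, v}) ` ({..<n} \<times> {..<n})" unfolding pairs_def by auto
  then have "card (pairs n) \<le> card ((\<lambda>(u, v). {u, v}) ` ({..<n} \<times> {..<n}))"
    by (rule card_mono[rotated]) simp
  also have "\<dots> \<le> card ({..<n} \<times> {..<n})" by (rule card_image_le) simp
  finally show ?thesis by (simp add: card_cartesian_product)
qed

lemma isdone_fc: "isdone n c \<longleftrightarrow> fc n c = 0"
proof -
  have "finite {u. u < n \<and> fst c u = Free}" by simp
  then show ?thesis unfolding isdone_def fc_def by auto
qed

lemma runc_done: "isdone n c \<Longrightarrow> isdone n (runc k c s t)"
  by (induction t arbitrary: c s) (simp_all add: done_mono)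

lemma fc_lt: assumes "Inv n k l c" shows "fc n c < n"
proof -
  obtain S p d where c: "c = cfgS l p S" and D: "InvD n k l p S d" using assms unfolding Inv_def by blast
  have ln: "l < n" using D unfolding InvD_def by auto
  have "{u. u < n \<and> fst c u = Free} \<subseteq> {..<n} - {l}" unfolding c free_cfgS by auto
  then have "fc n c \<le> card ({..<n} - {l})" unfolding fc_def by (rule card_mono[rotated]) simp
  also have "\<dots> = n - 1" using ln by simp
  finally show ?thesis using ln by simp
qed

lemma fire_fc:
  assumes D: "InvD n k l p S d" and x: "x \<in> insert l S" and y: "y \<notin> insert l S" "y < n"
    and ck: "cnt p S x < k"
  shows "fc n (step k (cfgS l p S) {x, y}) < fc n (cfgS l p S)"
proof -
  have st: "step k (cfgS l p S) {x, y} = cfgS l (p(y:=x)) (insert y S)"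
    using fire(1)[OF D x y(1) y(2) ck] .
  have "{u. u < n \<and> u \<notin> insert l (insert y S)} \<subset> {u. u < n \<and> u \<notin> insert l S}"
    using y by auto
  then have "card {u. u < n \<and> u \<notin> insert l (insert y S)} < card {u. u < n \<and> u \<notin> insert l S}"
    by (rule psubset_card_mono[rotated]) simp
  then show ?thesis unfolding fc_def st free_cfgS by simp
qed

lemma F_Suc:
  assumes n: "n \<ge> 2"
  shows "emeasure (stream_space (MP n)) {s \<in> space (stream_space (MP n)). \<not> isdone n (runc k c s (Suc T))}
    = (\<Sum>e\<in>pairs n. emeasure (stream_space (MP n)) {s \<in> space (stream_space (MP n)). \<not> isdone n (runc k (step k c e) s T)})
      / of_nat (card (pairs n))"
proof -
  interpret prob_space "MP n" by (rule prob_space_measure_pmf)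
  have "emeasure (stream_space (MP n)) {s \<in> space (stream_space (MP n)). \<not> isdone n (runc k c s (Suc T))}
    = (\<integral>\<^sup>+t. emeasure (stream_space (MP n)) {x\<in>space (stream_space (MP n)). t ## x \<in>
         {s \<in> space (stream_space (MP n)). \<not> isdone n (runc k c s (Suc T))}} \<partial>(MP n))"
    by (rule prob_space.emeasure_stream_space[OF prob_space_measure_pmf sets_runc])
  also have "\<dots> = (\<integral>\<^sup>+t. emeasure (stream_space (MP n)) {s \<in> space (stream_space (MP n)). \<not> isdone n (runc k (step k c t) s T)} \<partial>(MP n))"
    by (simp add: space_stream_space)
  also have "\<dots> = (\<Sum>e\<in>pairs n. emeasure (stream_space (MP n)) {s \<in> space (stream_space (MP n)). \<not> isdone n (runc k (step k c e) s T)})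
      / of_nat (card (pairs n))"
    by (rule nn_integral_pmf_of_set[OF pairs_ne'[OF n] pairs_finite])
  finally show ?thesis .
qed

lemma key_ineq:
  fixes nf r N n :: nat
  assumes n: "n \<ge> 2" and r: "1 \<le> r" "r < n" and nf: "2 * nf \<ge> n - r + 1" and N: "N \<le> n * n"
  shows "real N - real (nf * r) * xx n r \<le> real N * (1 - th n)"
proof -
  have nr: "real n - real r \<ge> 1" using r by linarith
  have nf': "2 * real nf \<ge> real n - real r" using nf r by linarith
  have "real (nf * r) * xx n r = real nf * real n / (4 * (real n - real r))"
    unfolding xx_def using r nr by (simp add: field_simps)
  also have "\<dots> \<ge> ((real n - real r) / 2) * real n / (4 * (real n - real r))"
    using nf' nr by (intro divide_right_mono mult_right_mono) auto
  also have "((real n - real r) / 2) * real n / (4 * (real n - real r)) = real n / 8"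
    using nr by (simp add: field_simps)
  finally have a: "real (nf * r) * xx n r \<ge> real n / 8" .
  have "real N * th n \<le> real n * real n * th n"
    using N unfolding th_def by (intro mult_right_mono) (simp_all add: of_nat_mult[symmetric] del: of_nat_mult)
  also have "\<dots> = real n / 8" unfolding th_def using n by (simp add: field_simps)
  finally have b: "real N * th n \<le> real n / 8" .
  show ?thesis using a b by (simp add: algebra_simps)
qed


lemma main_bound:
  assumes k: "k \<ge> 2" and n: "n \<ge> 2"
  shows "Inv n k l c \<Longrightarrow> emeasure (stream_space (MP n)) {s \<in> space (stream_space (MP n)). \<not> isdone n (runc k c s T)}
     \<le> ennreal ((1 - th n) ^ T * psi n (fc n c))"
proof (induction T arbitrary: c)
  case 0
  interpret S: prob_space "stream_space (MP n)"
    by (rule prob_space.prob_space_stream_space[OF prob_space_measure_pmf])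
  have "emeasure (stream_space (MP n)) {s \<in> space (stream_space (MP n)). \<not> isdone n (runc k c s 0)} \<le> 1"
    by (rule S.emeasure_le_1)
  also have "1 \<le> ennreal ((1 - th n) ^ 0 * psi n (fc n c))"
    using psi_ge1[OF n fc_lt[OF "0.prems"]] by simp
  finally show ?case .
next
  case (Suc T)
  let ?F = "\<lambda>T c. emeasure (stream_space (MP n)) {s \<in> space (stream_space (MP n)). \<not> isdone n (runc k c s T)}"
  define \<alpha> where "\<alpha> = (1 - th n) ^ T"
  have th: "0 < th n" "th n \<le> 1/16" unfolding th_def using n by (auto simp: field_simps)
  have \<alpha>: "\<alpha> > 0" unfolding \<alpha>_def using th by simp
  show ?case
  proof (cases "isdone n c")
    case True
    have E: "{s \<in> space (stream_space (MP n)). \<not> isdone n (runc k c s (Suc T))} = {}"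
      using runc_done True by blast
    show ?thesis unfolding E by simp
  next
    case False
    define r where "r = fc n c"
    have r: "1 \<le> r" "r < n" using False fc_lt[OF Suc.prems] isdone_fc unfolding r_def by auto
    obtain S p d where c: "c = cfgS l p S" and D: "InvD n k l p S d" using Suc.prems unfolding Inv_def by blast
    have fin: "finite S" using InvD_finite[OF D] .
    define T' where "T' = insert l S"
    define NF where "NF = {x\<in>T'. cnt p S x < k}"
    define FR where "FR = {y. y < n \<and> y \<notin> T'}"
    define Good where "Good = (\<lambda>(x, y). {x, y}) ` (NF \<times> FR)"
    have T'sub: "T' \<subseteq> {..<n}" using D unfolding InvD_def T'_def by auto
    have rFR: "r = card FR" unfolding r_def fc_def c free_cfgS FR_def T'_def ..
    have FReq: "FR = {..<n} - T'" unfolding FR_def by auto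
    have cT: "card T' + r = n"
    proof -
      have "card FR = n - card T'" unfolding FReq using T'sub by (simp add: card_Diff_subset finite_subset)
      moreover have "card T' \<le> n" using card_mono[OF _ T'sub] by simp
      ultimately show ?thesis using rFR by simp
    qed
    have nfb: "2 * card NF \<ge> n - r + 1" using nonfull_bound[OF D k] cT unfolding NF_def T'_def by simp
    have finNF: "finite NF" unfolding NF_def T'_def using fin by simp
    have finFR: "finite FR" unfolding FR_def by simp
    have inj: "inj_on (\<lambda>(x, y). {x, y}) (NF \<times> FR)"
    proof (rule inj_onI)
      fix a b assume a: "a \<in> NF \<times> FR" and b: "b \<in> NF \<times> FR" and eq: "(\<lambda>(x, y). {x, y}) a = (\<lambda>(x, y). {x, y}) b"
      obtain x1 y1 where a': "a = (x1, y1)" by (cases a)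
      obtain x2 y2 where b': "b = (x2, y2)" by (cases b)
      have "x1 \<in> T'" "x2 \<in> T'" "y1 \<notin> T'" "y2 \<notin> T'" using a b a' b' unfolding NF_def FR_def by auto
      then show "a = b" using eq a' b' by (auto simp: doubleton_eq_iff)
    qed
    have cG: "card Good = card NF * r" unfolding Good_def card_image[OF inj] rFR
      by (simp add: card_cartesian_product)
    have Gsub: "Good \<subseteq> pairs n"
    proof
      fix e assume "e \<in> Good"
      then obtain x y where xy: "x \<in> NF" "y \<in> FR" "e = {x, y}" unfolding Good_def by auto
      have "x < n" "y < n" "x \<noteq> y" using xy T'sub unfolding NF_def FR_def by auto
      then show "e \<in> pairs n" unfolding pairs_def using xy(3) by blast
    qed
    have good_fc: "fc n (step k c e) \<le> r - 1" if "e \<in> Good" for e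
    proof -
      obtain x y where xy: "x \<in> NF" "y \<in> FR" "e = {x, y}" using \<open>e \<in> Good\<close> unfolding Good_def by auto
      have "fc n (step k c e) < r" unfolding r_def c xy(3)
        by (rule fire_fc[OF D]) (use xy in \<open>auto simp: NF_def FR_def T'_def\<close>)
      then show ?thesis by simp
    qed
    define b where "b e = \<alpha> * psi n r - (if e \<in> Good then \<alpha> * (psi n r - psi n (r - 1)) else 0)" for e
    have bnd: "?F T (step k c e) \<le> ennreal (b e)" if e: "e \<in> pairs n" for e
    proof -
      have IH: "?F T (step k c e) \<le> ennreal (\<alpha> * psi n (fc n (step k c e)))"
        unfolding \<alpha>_def by (rule Suc.IH[OF Inv_step[OF Suc.prems e]])
      have "\<alpha> * psi n (fc n (step k c e)) \<le> b e"
      proof (cases "e \<in> Good")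
        case True
        then have "psi n (fc n (step k c e)) \<le> psi n (r - 1)"
          using good_fc r by (intro psi_mono[OF n]) auto
        then have "\<alpha> * psi n (fc n (step k c e)) \<le> \<alpha> * psi n (r - 1)"
          using \<alpha> by (intro mult_left_mono) auto
        also have "\<alpha> * psi n (r - 1) = b e" unfolding b_def using True by (simp add: algebra_simps)
        finally show ?thesis .
      next
        case False
        have "fc n (step k c e) \<le> r" unfolding r_def by (rule fc_mono)
        then have "psi n (fc n (step k c e)) \<le> psi n r"
          using r by (intro psi_mono[OF n]) auto
        then show ?thesis unfolding b_def using False \<alpha> by simp
      qed
      then show ?thesis using IH order_trans ennreal_leI by blast
    qed
    have bpos: "b e \<ge> 0" for e
    proof -
      have "psi n (r - 1) \<ge> 1" using psi_ge1[OF n] r by simp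
      moreover have "psi n r \<ge> 1" using psi_ge1[OF n] r by simp
      ultimately show ?thesis unfolding b_def using \<alpha> by (simp add: zero_le_mult_iff)
    qed
    have sumb: "(\<Sum>e\<in>pairs n. b e) = real (card (pairs n)) * \<alpha> * psi n r - real (card Good) * (\<alpha> * (psi n r - psi n (r - 1)))"
    proof -
      have "(\<Sum>e\<in>pairs n. b e) = (\<Sum>e\<in>pairs n. \<alpha> * psi n r) - (\<Sum>e\<in>pairs n. if e \<in> Good then \<alpha> * (psi n r - psi n (r - 1)) else 0)"
        unfolding b_def by (rule sum_subtractf)
      also have "(\<Sum>e\<in>pairs n. if e \<in> Good then \<alpha> * (psi n r - psi n (r - 1)) else 0) = (\<Sum>e\<in>{e\<in>pairs n. e \<in> Good}. \<alpha> * (psi n r - psi n (r - 1)))"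
        by (rule sum.inter_filter[symmetric, OF pairs_finite])
      also have "{e\<in>pairs n. e \<in> Good} = Good" using Gsub by auto
      finally show ?thesis by simp
    qed
    have prec: "psi n (r - 1) = psi n r * (1 - xx n r)" by (rule psi_rec[OF n r])
    have keyr: "(\<Sum>e\<in>pairs n. b e) \<le> real (card (pairs n)) * ((1 - th n) ^ Suc T * psi n r)"
    proof -
      have ki: "real (card (pairs n)) - real (card NF * r) * xx n r \<le> real (card (pairs n)) * (1 - th n)"
        by (rule key_ineq[OF n r nfb card_pairs_le])
      have ps: "\<alpha> * psi n r > 0" using \<alpha> psi_ge1[OF n r(2)] by simp
      have "(\<Sum>e\<in>pairs n. b e) = (\<alpha> * psi n r) * (real (card (pairs n)) - real (card NF * r) * xx n r)"
        unfolding sumb prec cG by (simp add: algebra_simps)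
      also have "\<dots> \<le> (\<alpha> * psi n r) * (real (card (pairs n)) * (1 - th n))"
        using ki ps by (intro mult_left_mono) auto
      also have "\<dots> = real (card (pairs n)) * ((1 - th n) ^ Suc T * psi n r)"
        unfolding \<alpha>_def by (simp add: algebra_simps)
      finally show ?thesis .
    qed
    have Npos: "real (card (pairs n)) > 0" using pairs_ne'[OF n] pairs_finite by (simp add: card_gt_0_iff)
    have "?F (Suc T) c = (\<Sum>e\<in>pairs n. ?F T (step k c e)) / of_nat (card (pairs n))"
      by (rule F_Suc[OF n])
    also have "\<dots> \<le> (\<Sum>e\<in>pairs n. ennreal (b e)) / of_nat (card (pairs n))"
      by (intro divide_right_mono_ennreal sum_mono bnd)
    also have "(\<Sum>e\<in>pairs n. ennreal (b e)) = ennreal (\<Sum>e\<in>pairs n. b e)"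
      using bpos by (simp add: sum_ennreal)
    also have "ennreal (\<Sum>e\<in>pairs n. b e) / of_nat (card (pairs n)) = ennreal ((\<Sum>e\<in>pairs n. b e) / real (card (pairs n)))"
      using Npos bpos by (simp add: ennreal_of_nat_eq_real_of_nat divide_ennreal sum_nonneg)
    also have "\<dots> \<le> ennreal ((1 - th n) ^ Suc T * psi n r)"
      using keyr Npos by (intro ennreal_leI) (simp add: field_simps)
    finally show ?thesis unfolding r_def .
  qed
qed


lemma real_bound:
  fixes a :: real and n :: nat
  assumes a: "a > 0" and n: "n \<ge> 3"
  defines "B \<equiv> 8 * (a + 3) * real n * ln (real n)"
  shows "(1 - th n) ^ nat \<lfloor>B\<rfloor> * (exp 1 * real n) \<le> real n powr (-a)"
proof -
  define T0 where "T0 = nat \<lfloor>B\<rfloor>"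
  have n0: "real n > 0" using n by simp
  have ln1: "ln (real n) \<ge> 1"
  proof -
    have "exp 1 \<le> real n" using exp_le n by linarith
    then show ?thesis using n0 by (metis exp_gt_zero ln_exp ln_le_cancel_iff)
  qed
  have B0: "B \<ge> 0" unfolding B_def using a ln1 by simp
  have T0B: "real T0 \<ge> B - 1" unfolding T0_def using B0 by linarith
  have th: "0 < th n" "th n \<le> 1" unfolding th_def using n by (auto simp: field_simps)
  have "(1 - th n) ^ T0 \<le> exp (- th n) ^ T0"
    using th by (intro power_mono) (auto, metis add_uminus_conv_diff exp_ge_add_one_self)
  also have "\<dots> = exp (- (th n * real T0))" by (simp add: exp_of_nat_mult[symmetric] mult.commute)
  also have "\<dots> \<le> exp (1 - (a + 3) * ln (real n))"
  proof -
    have "th n * real T0 \<ge> th n * (B - 1)" using th T0B by (intro mult_left_mono) auto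
    also have "th n * (B - 1) = (a + 3) * ln (real n) - th n" unfolding B_def th_def using n0
      by (simp add: field_simps)
    finally show ?thesis using th by simp
  qed
  finally have e1: "(1 - th n) ^ T0 \<le> exp (1 - (a + 3) * ln (real n))" .
  have "(1 - th n) ^ T0 * (exp 1 * real n) \<le> exp (1 - (a + 3) * ln (real n)) * (exp 1 * real n)"
    using e1 n0 by (intro mult_right_mono) auto
  also have eqn: "exp 1 * real n = exp (1 + ln (real n))" using n0 by (simp add: exp_add)
  also have "exp (1 - (a + 3) * ln (real n)) * exp (1 + ln (real n)) = exp (2 - (a + 2) * ln (real n))"
    by (simp add: exp_add[symmetric] algebra_simps)
  also have "\<dots> \<le> exp (- a * ln (real n))" using ln1 by (simp add: algebra_simps)
  also have "\<dots> = real n powr (-a)" unfolding powr_def using n0 by simp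
  finally show ?thesis unfolding T0_def eqn .
qed

lemma runc_Inv: "l < n \<Longrightarrow> (\<forall>t. s !! t \<in> pairs n) \<Longrightarrow> Inv n k l (runc k (init l) s t)"
  by (induction t) (simp_all add: Inv_init runc_Suc' Inv_step del: runc.simps(2))

lemma runc_const:
  assumes g: "\<forall>t. s !! t \<in> pairs n" and d: "isdone n (runc k c s T0)"
  shows "t \<ge> T0 \<Longrightarrow> runc k c s t = runc k c s T0"
proof (induction t rule: dec_induct)
  case (step m)
  have "isdone n (runc k c s m)" using d step.IH by simp
  then show ?case using step.IH done_step[OF _ g[rule_format, of m]] by (simp add: runc_Suc' del: runc.simps(2))
qed simp

lemma fc_init: "l < n \<Longrightarrow> fc n (init l) = n - 1"
proof -
  assume l: "l < n"
  have "{u. u < n \<and> fst (init l) u = Free} = {..<n} - {l}" unfolding init_def by auto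
  then show ?thesis unfolding fc_def using l by simp
qed


lemma part2:
  assumes k: "k \<ge> 2" and a: "a > 0"
  shows "\<exists>c::real. \<exists>N::nat. \<forall>n\<ge>N. n \<ge> 2 \<longrightarrow> (\<forall>l<n.
               measure (sched n)
                 {s \<in> space (sched n). \<exists>T::nat. \<exists>G.
                     real T \<le> c * real n * ln (real n) \<and> in_Tk n k G \<and>
                     stable_from n (run k l s) G T}
               \<ge> 1 - real n powr (- a))"
proof (intro exI[of _ "8 * (a + 3)"] exI[of _ 3] allI impI)
  fix n l :: nat assume n3: "n \<ge> 3" and n2: "n \<ge> 2" and l: "l < n"
  define S where "S = stream_space (MP n)"
  have schedS: "sched n = S" unfolding sched_def S_def ..
  define B where "B = 8 * (a + 3) * real n * ln (real n)"
  define T0 where "T0 = nat \<lfloor>B\<rfloor>"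
  have B0: "B \<ge> 0" unfolding B_def using a n3 by simp
  have T0B: "real T0 \<le> B" unfolding T0_def using B0 by linarith
  interpret P: prob_space S unfolding S_def
    by (rule prob_space.prob_space_stream_space[OF prob_space_measure_pmf])
  define A where "A = {s \<in> space S. \<exists>T::nat. \<exists>G. real T \<le> B \<and> in_Tk n k G \<and> stable_from n (run k l s) G T}"
  define D where "D = {s \<in> space S. isdone n (runc k (init l) s T0)}"
  have Aeq: "A = {s \<in> space S. \<exists>T::nat. real T \<le> B \<and> (\<exists>G\<in>Pow (pairs n). in_Tk n k G \<and>
        (\<forall>t. T \<le> t \<longrightarrow> iso n (out (runc k (init l) s t)) G))}"
  proof -
    have tk_sub: "in_Tk n k G \<Longrightarrow> G \<in> Pow (pairs n)" for G unfolding in_Tk_def by auto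
    show ?thesis unfolding A_def stable_from_def run_runc using tk_sub by blast
  qed
  have Ameas: "A \<in> sets S"
  proof -
    have "Measurable.pred S (\<lambda>s. \<exists>T::nat. real T \<le> B \<and> (\<exists>G\<in>Pow (pairs n). in_Tk n k G \<and>
        (\<forall>t. T \<le> t \<longrightarrow> iso n (out (runc k (init l) s t)) G)))"
      apply (rule pred_intros_countable(2))
      apply (rule pred_intros_conj1')
      apply (rule pred_intros_finite(4))
       apply (simp add: pairs_finite)
      apply (rule pred_intros_conj1')
      apply (rule pred_intros_countable(1))
      apply (rule pred_intros_imp')
      unfolding S_def apply (rule pred_runc)
      done
    then show ?thesis unfolding Aeq pred_def .
  qed
  have Dmeas: "D \<in> sets S" unfolding D_def S_def by (rule sets_runc)
  have AEg: "AE s in S. \<forall>t. s !! t \<in> pairs n"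
  proof -
    have "AE s in S. stream_all (\<lambda>e. e \<in> pairs n) s"
      unfolding S_def
    proof (rule prob_space.AE_stream_all[OF prob_space_measure_pmf])
      show "Measurable.pred (MP n) (\<lambda>e. e \<in> pairs n)" by simp
      show "AE x in MP n. x \<in> pairs n"
        by (simp add: AE_measure_pmf_iff set_pmf_of_set[OF pairs_ne'[OF n2] pairs_finite])
    qed
    then show ?thesis unfolding stream_all_def .
  qed
  have sub: "AE s in S. s \<in> D \<longrightarrow> s \<in> A"
    using AEg
  proof (rule eventually_mono)
    fix s assume g: "\<forall>t. s !! t \<in> pairs n"
    show "s \<in> D \<longrightarrow> s \<in> A"
    proof
      assume "s \<in> D"
      then have sp: "s \<in> space S" and d: "isdone n (runc k (init l) s T0)" unfolding D_def by auto
      have I: "Inv n k l (runc k (init l) s T0)" by (rule runc_Inv[OF l g])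
      have tk: "in_Tk n k (out (runc k (init l) s T0))" by (rule Inv_done_Tk[OF I d])
      have st: "stable_from n (run k l s) (out (runc k (init l) s T0)) T0"
        unfolding stable_from_def run_runc
      proof (intro allI impI)
        fix t assume "T0 \<le> t"
        then show "iso n (out (runc k (init l) s t)) (out (runc k (init l) s T0))"
          using runc_const[OF g d] iso_refl by metis
      qed
      show "s \<in> A" unfolding A_def using sp T0B tk st by blast
    qed
  qed
  have mDA: "measure S D \<le> measure S A"
  proof -
    have "emeasure S D \<le> emeasure S A" by (rule emeasure_mono_AE[OF sub Ameas])
    then show ?thesis by (simp add: P.emeasure_eq_measure)
  qed
  have compl: "space S - D = {s \<in> space S. \<not> isdone n (runc k (init l) s T0)}" unfolding D_def by auto
  have "emeasure S (space S - D) \<le> ennreal ((1 - th n) ^ T0 * psi n (fc n (init l)))"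
    unfolding compl unfolding S_def by (rule main_bound[OF k n2 Inv_init[OF l]])
  also have "\<dots> \<le> ennreal (real n powr (- a))"
  proof (rule ennreal_leI)
    have th: "th n \<le> 1" unfolding th_def using n2 by (simp add: field_simps)
    have "(1 - th n) ^ T0 * psi n (fc n (init l)) \<le> (1 - th n) ^ T0 * (exp 1 * real n)"
      unfolding fc_init[OF l] using psi_final[OF n2] th by (intro mult_left_mono) auto
    also have "\<dots> \<le> real n powr (- a)" unfolding T0_def B_def by (rule real_bound[OF a n3])
    finally show "(1 - th n) ^ T0 * psi n (fc n (init l)) \<le> real n powr (- a)" .
  qed
  finally have "measure S (space S - D) \<le> real n powr (- a)"
    by (simp add: P.emeasure_eq_measure)
  moreover have "measure S (space S - D) = 1 - measure S D" by (rule P.prob_compl[OF Dmeas])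
  ultimately have "measure S D \<ge> 1 - real n powr (- a)" by simp
  then have "measure S A \<ge> 1 - real n powr (- a)" using mDA by simp
  then show "measure (sched n) {s \<in> space (sched n). \<exists>T::nat. \<exists>G.
                     real T \<le> 8 * (a + 3) * real n * ln (real n) \<and> in_Tk n k G \<and>
                     stable_from n (run k l s) G T} \<ge> 1 - real n powr (- a)"
    unfolding schedS A_def B_def .
qed


theorem theorem2:
  fixes k :: nat
  assumes "k \<ge> 2"
  shows "(\<forall>n\<ge>2. \<forall>l<n.
            (\<forall>C. execution n k l C \<and> fair n k C \<longrightarrow>
                 (\<exists>G. in_Tk n k G \<and> stabilises_to n C G)) \<and>
            (\<forall>G. in_Tk n k G \<longrightarrow>
                 (\<exists>C. execution n k l C \<and> stabilises_to n C G)))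
       \<and> (\<forall>a::real. a > 0 \<longrightarrow>
            (\<exists>c::real. \<exists>N::nat. \<forall>n\<ge>N. n \<ge> 2 \<longrightarrow> (\<forall>l<n.
               measure (sched n)
                 {s \<in> space (sched n). \<exists>T::nat. \<exists>G.
                     real T \<le> c * real n * ln (real n) \<and> in_Tk n k G \<and>
                     stable_from n (run k l s) G T}
               \<ge> 1 - real n powr (- a))))"
proof -
  have P1: "\<forall>n\<ge>2. \<forall>l<n.
            (\<forall>C. execution n k l C \<and> fair n k C \<longrightarrow>
                 (\<exists>G. in_Tk n k G \<and> stabilises_to n C G)) \<and>
            (\<forall>G. in_Tk n k G \<longrightarrow>
                 (\<exists>C. execution n k l C \<and> stabilises_to n C G))"
    using fair_part[OF assms] exist_part by blast
  have P2: "\<forall>a::real. a > 0 \<longrightarrow>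
            (\<exists>c::real. \<exists>N::nat. \<forall>n\<ge>N. n \<ge> 2 \<longrightarrow> (\<forall>l<n.
               measure (sched n)
                 {s \<in> space (sched n). \<exists>T::nat. \<exists>G.
                     real T \<le> c * real n * ln (real n) \<and> in_Tk n k G \<and>
                     stable_from n (run k l s) G T}
               \<ge> 1 - real n powr (- a)))"
    using part2[OF assms] by blast
  show ?thesis using P1 P2 by blast
qed

end
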